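(* Let $u,\alpha\in k[T]$ satisfy $P_2(T)^p-P_2^\sigma(T^p)=m_p\bigl(\bar P'(T)^p u(T)-2\alpha(T)\bar P(T)^p\bigr)$, and let $v,\beta\in k[T]$ satisfy $Q_2(T)^p-Q_2^\sigma(T^p)=m_p\bigl(\bar Q'(T)^p v(T)-2\beta(T)\bar Q(T)^p\bigr)$. For $0\leq i\leq g-1$ set $$f_U=x^{ip}\,\frac{x^{p-1}+u'(x)}{y^{p-1}}\,\frac{dx}{y},\quad f_V=-x_1^{p(g-1-i)}\,\frac{x_1^{p-1}+v'(x_1)}{t^{p-1}}\,\frac{dx_1}{t},\quad h=x^{ip}\,\frac{u(x)+x^{2p}v(x_1)}{y^p}.$$ Then $f_U\in\Omega^1_{U_0/k}$, $f_V\in\Omega^1_{V_0/k}$ (i.e. they are regular differentials on $U_0$, resp. $V_0$), $h\in\mathcal{O}(U_0\cap V_0)$, and $$f_V-f_U+dh=0.$$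
   Context: $k$ is a finite field of characteristic $p\neq 2$, $W_2(k)=W(k)/p^2$, $\sigma$ the Frobenius of $W_2(k)$; for $Q=\sum b_jT^j$, $Q^\sigma=\sum\sigma(b_j)T^j$; $m_p:k[T]\to W_2(k)[T]$ is induced by multiplication by $p$. Let $P\in W(k)[X]$ be monic of odd degree $d=2g+1$, separable over $\operatorname{Frac}W(k)$, with separable reduction $\bar P\in k[X]$; $P_2$ is its reduction mod $p^2$, $Q_2(x_1)=x_1^{d+1}P_2(1/x_1)$, $\bar Q(x_1)=x_1^{d+1}\bar P(1/x_1)$. $X_0$ is the curve over $k$ obtained by gluing $U_0=\operatorname{Spec}k[x,y]/(y^2-\bar P(x))$ and $V_0=\operatorname{Spec}k[x_1,t]/(t^2-\bar Q(x_1))$ along $x_1=1/x$, $t=y/x^{g+1}$. (These pairs $(u,\alpha)$ and $(v,\beta)$ define lifts of Frobenius $x\mapsto x^p+p\,u(x)$, $y\mapsto y^p+y^p p\,\alpha(x)$ on $U_1$ and $x_1\mapsto x_1^p+p\,v(x_1)$, $t\mapsto t^p+t^p p\,\beta(x_1)$ on $V_1$; the triple $(f_U,f_V,h)$ is the image of $x^i\,dx/y$ under the associated Deligne–Illusie map.) *)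

theory Defs
  imports "HOL-Computational_Algebra.Computational_Algebra"
begin

type_synonym 'k rf = "'k poly fract"

definition rf_deriv :: "'k::field rf \<Rightarrow> 'k rf" where
  "rf_deriv z = (SOME D. \<exists>n m. m \<noteq> 0 \<and> z = Fract n m \<and>
                     D = Fract (pderiv n * m - n * pderiv m) (m * m))"

text \<open>An element (a, b) stands for a + b*y, with a, b in k(x) and y^2 = Pb(x).
  A meromorphic differential on X_0 is written w = F dx with F in K
  (Omega_K is the free K-module of rank 1 generated by dx);
  we represent it by F.\<close>

type_synonym 'k hf = "'k rf \<times> 'k rf"

definition hf_add :: "'k::field hf \<Rightarrow> 'k hf \<Rightarrow> 'k hf" where
  "hf_add z w = (fst z + fst w, snd z + snd w)"

definition hf_neg :: "'k::field hf \<Rightarrow> 'k hf" where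
  "hf_neg z = (- fst z, - snd z)"

definition hf_mult :: "'k::field poly \<Rightarrow> 'k hf \<Rightarrow> 'k hf \<Rightarrow> 'k hf" where
  "hf_mult Pb z w = (fst z * fst w + snd z * snd w * to_fract Pb,
                     fst z * snd w + snd z * fst w)"

definition hf_one :: "'k::field hf" where "hf_one = (1, 0)"

definition hf_pow :: "'k::field poly \<Rightarrow> 'k hf \<Rightarrow> nat \<Rightarrow> 'k hf" where
  "hf_pow Pb z n = (hf_mult Pb z ^^ n) hf_one"

text \<open>Inverse in the field K: (a + b y)^{-1} = (a - b y) / (a^2 - b^2 Pb).\<close>
definition hf_inv :: "'k::field poly \<Rightarrow> 'k hf \<Rightarrow> 'k hf" where
  "hf_inv Pb z = (let n = fst z * fst z - snd z * snd z * to_fract Pb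
                  in (fst z / n, - snd z / n))"

definition hf_const :: "'k::field \<Rightarrow> 'k hf" where
  "hf_const c = (to_fract [:c:], 0)"

definition hf_poly :: "'k::field poly \<Rightarrow> 'k poly \<Rightarrow> 'k hf \<Rightarrow> 'k hf" where
  "hf_poly Pb q z = foldr (\<lambda>i acc. hf_add (hf_mult Pb (hf_const (coeff q i)) (hf_pow Pb z i)) acc)
                      [0..<Suc (degree q)] (0, 0)"

definition hf_x :: "'k::field hf" where "hf_x = (to_fract [:0, 1:], 0)"
definition hf_y :: "'k::field hf" where "hf_y = (0, 1)"
definition hf_x1 :: "'k::field poly \<Rightarrow> 'k hf" where "hf_x1 Pb = hf_inv Pb hf_x"
definition hf_t :: "'k::field poly \<Rightarrow> nat \<Rightarrow> 'k hf" where
  "hf_t Pb g = hf_mult Pb hf_y (hf_pow Pb (hf_x1 Pb) (g + 1))"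

text \<open>Exterior derivative d : K \<rightarrow> Omega_K, d z = (dz/dx) dx, using
  d(a + b y) = a' dx + b' y dx + b dy and 2 y dy = Pb'(x) dx.\<close>
definition hf_d :: "'k::field poly \<Rightarrow> 'k hf \<Rightarrow> 'k hf" where
  "hf_d Pb z = (rf_deriv (fst z),
                rf_deriv (snd z) + snd z * to_fract (pderiv Pb) / (2 * to_fract Pb))"

text \<open>O(U_0) = k[x,y]/(y^2 - Pb(x)) inside K.\<close>
definition O_U :: "'k::field poly \<Rightarrow> 'k hf set" where
  "O_U Pb = {(to_fract a, to_fract b) | a b. True}"

text \<open>O(V_0) = k[x_1,t]/(t^2 - Qb(x_1)) inside K.\<close>
definition O_V :: "'k::field poly \<Rightarrow> nat \<Rightarrow> 'k hf set" where
  "O_V Pb g = {hf_add (hf_poly Pb A (hf_x1 Pb)) (hf_mult Pb (hf_poly Pb B (hf_x1 Pb)) (hf_t Pb g))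
               | A B. True}"

text \<open>O(U_0 \<inter> V_0) = O(U_0)[1/x].\<close>
definition O_UV :: "'k::field poly \<Rightarrow> 'k hf set" where
  "O_UV Pb = {hf_mult Pb f (hf_pow Pb (hf_x1 Pb) n) | f n. f \<in> O_U Pb}"

definition Omega_U :: "'k::field poly \<Rightarrow> 'k hf set" where
  "Omega_U Pb = {hf_add (hf_mult Pb a (hf_d Pb hf_x)) (hf_mult Pb b (hf_d Pb hf_y))
                 | a b. a \<in> O_U Pb \<and> b \<in> O_U Pb}"

definition Omega_V :: "'k::field poly \<Rightarrow> nat \<Rightarrow> 'k hf set" where
  "Omega_V Pb g = {hf_add (hf_mult Pb a (hf_d Pb (hf_x1 Pb))) (hf_mult Pb b (hf_d Pb (hf_t Pb g)))
                   | a b. a \<in> O_V Pb g \<and> b \<in> O_V Pb g}"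

text \<open>W_2(k) is characterised (up to unique isomorphism) as a commutative ring W with a
  surjective ring homomorphism \<pi> : W \<rightarrow> k whose kernel is pW and such that the
  p-torsion of W is also pW (i.e. W is flat over Z/p^2 lifting k); \<sigma> is the ring
  endomorphism lifting Frobenius, and m_p : k \<rightarrow> W is the map \<pi>(a) \<mapsto> p a.\<close>
definition is_W2 :: "nat \<Rightarrow> ('w::comm_ring_1 \<Rightarrow> 'k::field) \<Rightarrow> ('w \<Rightarrow> 'w) \<Rightarrow> ('k \<Rightarrow> 'w) \<Rightarrow> bool" where
  "is_W2 p \<pi> \<sigma> mp \<longleftrightarrow>
     (\<forall>a b. \<pi> (a + b) = \<pi> a + \<pi> b) \<and> (\<forall>a b. \<pi> (a * b) = \<pi> a * \<pi> b) \<and> \<pi> 1 = 1 \<and>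
     surj \<pi> \<and>
     (\<forall>a. \<pi> a = 0 \<longleftrightarrow> (\<exists>b. a = of_nat p * b)) \<and>
     (\<forall>a. of_nat p * a = 0 \<longleftrightarrow> \<pi> a = 0) \<and>
     (\<forall>a b. \<sigma> (a + b) = \<sigma> a + \<sigma> b) \<and> (\<forall>a b. \<sigma> (a * b) = \<sigma> a * \<sigma> b) \<and> \<sigma> 1 = 1 \<and>
     (\<forall>a. \<pi> (\<sigma> a) = (\<pi> a) ^ p) \<and>
     (\<forall>a. mp (\<pi> a) = of_nat p * a)"

end

theory Submission
  imports Defs
begin


section \<open>Reflection with a degree bound\<close>

definition reflN :: "nat \<Rightarrow> 'a::comm_semiring_1 poly \<Rightarrow> 'a poly" where
  "reflN n f = (\<Sum>k\<le>n. monom (coeff f k) (n - k))"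

lemma coeff_refl: "coeff (reflN n f) j = (if j \<le> n then coeff f (n - j) else 0)"
proof -
  have "coeff (reflN n f) j = (\<Sum>k\<le>n. if n - k = j then coeff f k else 0)"
    unfolding reflN_def by (simp add: coeff_sum coeff_monom)
  also have "\<dots> = (\<Sum>k\<in>(if j \<le> n then {n - j} else {}). coeff f k)"
    by (rule sum.mono_neutral_cong_right) (auto split: if_splits)
  finally show ?thesis by auto
qed

lemma refl_add: "reflN n (f + g) = reflN n f + reflN n g"
  by (rule poly_eqI) (simp add: coeff_refl)

lemma refl_diff: "reflN n (f - g) = reflN n f - reflN n (g :: 'a::comm_ring_1 poly)"
  by (rule poly_eqI) (simp add: coeff_refl)

lemma refl_0[simp]: "reflN n 0 = 0"
  by (rule poly_eqI) (simp add: coeff_refl)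

lemma refl_sum: "reflN n (sum h A) = sum (\<lambda>a. reflN n (h a)) A"
  by (induct A rule: infinite_finite_induct) (auto simp: refl_add)

lemma refl_monom: "k \<le> n \<Longrightarrow> reflN n (monom c k) = monom c (n - k)"
  by (rule poly_eqI) (auto simp: coeff_refl coeff_monom)

lemma degree_refl: "degree (reflN n f) \<le> n"
  by (rule degree_le) (simp add: coeff_refl)

lemma refl_mult:
  assumes "degree f \<le> m" "degree g \<le> n"
  shows "reflN (m + n) (f * g) = reflN m f * reflN n g"
proof -
  have f: "f = (\<Sum>i\<le>m. monom (coeff f i) i)" using poly_as_sum_of_monoms'[OF assms(1)] by simp
  have g: "g = (\<Sum>j\<le>n. monom (coeff g j) j)" using poly_as_sum_of_monoms'[OF assms(2)] by simp
  have "f * g = (\<Sum>i\<le>m. \<Sum>j\<le>n. monom (coeff f i * coeff g j) (i + j))"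
    by (subst f, subst g) (simp add: sum_distrib_left sum_distrib_right mult_monom sum.swap[of _ "{..n}"])
  hence "reflN (m + n) (f * g) = (\<Sum>i\<le>m. \<Sum>j\<le>n. monom (coeff f i * coeff g j) (m + n - (i + j)))"
    by (simp add: refl_sum refl_monom)
  also have "\<dots> = (\<Sum>i\<le>m. \<Sum>j\<le>n. monom (coeff f i) (m - i) * monom (coeff g j) (n - j))"
    by (intro sum.cong refl) (auto simp: mult_monom)
  also have "\<dots> = reflN m f * reflN n g"
    unfolding reflN_def by (simp add: sum_distrib_left sum_distrib_right sum.swap[of _ "{..n}"])
  finally show ?thesis .
qed

lemma refl_power:
  assumes "degree f \<le> n"
  shows "reflN (n * k) (f ^ k) = reflN n f ^ k"
proof (induct k)
  case 0
  then show ?case by (rule poly_eqI) (simp add: coeff_refl)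
next
  case (Suc k)
  have d: "degree (f ^ k) \<le> n * k"
    by (metis assms degree_power_le le_trans mult.commute mult_le_mono2)
  have "reflN (n * Suc k) (f ^ Suc k) = reflN (n + n * k) (f * f ^ k)" by simp
  also have "\<dots> = reflN n f * reflN (n * k) (f ^ k)" by (rule refl_mult[OF assms d])
  finally show ?case using Suc by simp
qed

lemma pcompose_monom_monom: "pcompose (monom c k) (monom (1::'a::comm_semiring_1) p) = monom c (k * p)"
proof -
  have "pcompose (monom c k) (monom 1 p) = smult c (monom 1 p ^ k)"
    by (simp add: pcompose_altdef map_poly_monom poly_monom)
  also have "\<dots> = monom c (k * p)"
    by (simp add: monom_power smult_monom mult.commute)
  finally show ?thesis .
qed

lemma refl_pcompose:
  assumes "degree f \<le> n"
  shows "reflN (n * p) (pcompose f (monom 1 p)) = pcompose (reflN n f) (monom (1::'a::comm_semiring_1) p)"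
proof -
  have f: "f = (\<Sum>i\<le>n. monom (coeff f i) i)" using poly_as_sum_of_monoms'[OF assms] by simp
  have "reflN (n * p) (pcompose f (monom 1 p)) = (\<Sum>i\<le>n. monom (coeff f i) (n * p - i * p))"
    by (subst f) (simp add: pcompose_sum pcompose_monom_monom refl_sum refl_monom)
  also have "\<dots> = (\<Sum>i\<le>n. pcompose (monom (coeff f i) (n - i)) (monom 1 p))"
    by (intro sum.cong refl) (simp add: pcompose_monom_monom diff_mult_distrib)
  also have "\<dots> = pcompose (reflN n f) (monom 1 p)"
    unfolding reflN_def by (simp add: pcompose_sum)
  finally show ?thesis .
qed

lemma refl_map_poly: "h 0 = 0 \<Longrightarrow> reflN n (map_poly h f) = map_poly h (reflN n f)"
  by (rule poly_eqI) (simp add: coeff_refl coeff_map_poly)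

lemma refl_reflect:
  assumes "degree f = n"
  shows "monom 1 1 * reflect_poly f = reflN (Suc n) (f :: 'a::comm_semiring_1 poly)"
  by (rule poly_eqI) (auto simp: coeff_refl coeff_monom_mult coeff_reflect_poly assms
       Suc_diff_le coeff_eq_0)



section \<open>Formal derivative over arbitrary commutative rings\<close>

definition wder :: "'a::comm_semiring_1 poly \<Rightarrow> 'a poly" where
  "wder p = Poly (map (\<lambda>n. of_nat (Suc n) * coeff p (Suc n)) [0..<degree p])"

lemma coeff_wder: "coeff (wder p) n = of_nat (Suc n) * coeff p (Suc n)"
proof (cases "n < degree p")
  case True then show ?thesis by (simp add: wder_def nth_default_nth)
next
  case False then show ?thesis by (simp add: wder_def nth_default_beyond coeff_eq_0)
qed

lemma wder_add: "wder (p + q) = wder p + wder q"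
  by (rule poly_eqI) (simp add: coeff_wder algebra_simps)

lemma wder_diff: "wder (p - q) = wder p - wder (q :: 'a::comm_ring_1 poly)"
  by (rule poly_eqI) (simp add: coeff_wder algebra_simps)

lemma wder_smult: "wder (smult a p) = smult a (wder p)"
  by (rule poly_eqI) (simp add: coeff_wder algebra_simps)

lemma wder_pCons: "wder (pCons a p) = p + pCons 0 (wder p)"
  by (rule poly_eqI) (auto simp: coeff_wder coeff_pCons algebra_simps split: nat.splits)

lemma wder_const[simp]: "wder [:a:] = 0"
  by (rule poly_eqI) (simp add: coeff_wder coeff_pCons split: nat.splits)

lemma wder_0[simp]: "wder 0 = 0"
  by (rule poly_eqI) (simp add: coeff_wder)

lemma wder_1[simp]: "wder 1 = 0"
  by (rule poly_eqI) (simp add: coeff_wder coeff_1)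

lemma wder_mult: "wder (p * q) = p * wder q + q * wder p"
  by (induct p) (auto simp: wder_add wder_smult wder_pCons algebra_simps)

lemma wder_power_Suc: "wder (p ^ Suc n) = smult (of_nat (Suc n)) (p ^ n) * wder p"
proof (induction n)
  case (Suc n)
  then show ?case
    by (simp add: wder_mult smult_add_left algebra_simps)
qed (simp add: wder_pCons)

lemma wder_power: "wder (p ^ n) = smult (of_nat n) (p ^ (n - 1) * wder p)"
  by (cases n) (simp_all add: wder_power_Suc del: power_Suc)

lemma wder_monom: "wder (monom c n) = monom (of_nat n * c) (n - 1)"
  by (rule poly_eqI) (cases n, auto simp: coeff_wder coeff_monom)

lemma wder_pcompose: "wder (pcompose p q) = pcompose (wder p) q * wder q"
  by (induction p rule: pCons_induct)
     (auto simp: pcompose_pCons wder_add wder_mult wder_pCons pcompose_add algebra_simps)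

lemma wder_pderiv: "wder p = pderiv (p :: 'a::{comm_semiring_1,semiring_no_zero_divisors} poly)"
  by (rule poly_eqI) (simp add: coeff_wder coeff_pderiv)

locale rhom =
  fixes h :: "'a::comm_ring_1 \<Rightarrow> 'b::comm_ring_1"
  assumes hadd: "h (a + b) = h a + h b" and hmul: "h (a * b) = h a * h b" and hone: "h 1 = 1"
begin

lemma h0[simp]: "h 0 = 0"
  using hadd[of 0 0] by simp

lemma hdiff: "h (a - b) = h a - h b"
  using hadd[of "a - b" b] by (simp add: algebra_simps)

lemma hsum: "h (sum f A) = sum (\<lambda>x. h (f x)) A"
  by (induct A rule: infinite_finite_induct) (auto simp: hadd)

lemma hof_nat: "h (of_nat n) = of_nat n"
  by (induct n) (auto simp: hadd hone)

lemma hpow: "h (a ^ n) = h a ^ n"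
  by (induct n) (auto simp: hmul hone)

lemma mp_add: "map_poly h (p + q) = map_poly h p + map_poly h q"
  by (rule poly_eqI) (simp add: coeff_map_poly hadd)

lemma mp_diff: "map_poly h (p - q) = map_poly h p - map_poly h q"
  by (rule poly_eqI) (simp add: coeff_map_poly hdiff)

lemma mp_sum: "map_poly h (sum f A) = sum (\<lambda>x. map_poly h (f x)) A"
  by (induct A rule: infinite_finite_induct) (auto simp: mp_add)

lemma mp_mult: "map_poly h (p * q) = map_poly h p * map_poly h q"
  by (rule poly_eqI) (simp add: coeff_map_poly coeff_mult hsum hmul)

lemma mp_one: "map_poly h 1 = 1"
  by (simp add: hone)

lemma mp_power: "map_poly h (p ^ n) = map_poly h p ^ n"
  by (induct n) (auto simp: mp_mult mp_one)

lemma mp_monom: "map_poly h (monom c n) = monom (h c) n"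
  by (simp add: map_poly_monom)

lemma mp_wder: "map_poly h (wder p) = wder (map_poly h p)"
  by (rule poly_eqI) (simp add: coeff_map_poly coeff_wder hmul hof_nat hadd hone)

lemma mp_pcompose_monom:
  "map_poly h (pcompose f (monom 1 k)) = pcompose (map_poly h f) (monom 1 k)"
proof -
  have f: "f = (\<Sum>i\<le>degree f. monom (coeff f i) i)" by (simp add: poly_as_sum_of_monoms)
  have g: "map_poly h f = (\<Sum>i\<le>degree f. monom (coeff (map_poly h f) i) i)"
    by (rule poly_as_sum_of_monoms'[symmetric]) (rule map_poly_degree_leq)
  have "map_poly h (pcompose f (monom 1 k)) = (\<Sum>i\<le>degree f. monom (h (coeff f i)) (i * k))"
    by (subst f) (simp add: pcompose_sum pcompose_monom_monom mp_sum mp_monom)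
  also have "\<dots> = pcompose (map_poly h f) (monom 1 k)"
    by (subst g) (simp add: pcompose_sum pcompose_monom_monom coeff_map_poly)
  finally show ?thesis .
qed

end


lemma of_nat_pow_char:
  assumes "prime CHAR('k::comm_ring_1)" "p = CHAR('k)"
  shows "(of_nat m :: 'k) ^ p = of_nat m"
proof (induct m)
  case 0 then show ?case using assms prime_gt_0_nat by (simp add: power_0_left)
next
  case (Suc m)
  have "(of_nat (Suc m) :: 'k) ^ p = (of_nat m + 1) ^ p" by (simp add: add.commute)
  also have "\<dots> = of_nat m ^ p + 1 ^ p" by (rule freshmans_dream[OF assms])
  finally show ?case using Suc by (simp add: add.commute)
qed

lemma frob_poly:
  fixes f :: "'k::field poly"
  assumes "prime CHAR('k)" "p = CHAR('k)"
  shows "pcompose (map_poly (\<lambda>c. c ^ p) f) (monom 1 p) = f ^ p"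
proof (induct f)
  case 0 then show ?case using assms prime_gt_0_nat by (simp add: power_0_left)
next
  case (pCons a f)
  have p0: "p > 0" using assms prime_gt_0_nat by auto
  have pc: "prime CHAR('k poly)" using assms by simp
  have e: "pCons a f = [:a:] + monom 1 1 * f"
    by (rule poly_eqI) (auto simp: coeff_pCons coeff_monom_mult split: nat.splits)
  have "pCons a f ^ p = [:a:] ^ p + (monom 1 1 * f) ^ p"
    unfolding e by (rule freshmans_dream) (use pc assms in auto)
  also have "\<dots> = [:a ^ p:] + monom 1 p * f ^ p"
    by (simp add: power_mult_distrib monom_power poly_const_pow)
  finally have *: "pCons a f ^ p = [:a ^ p:] + monom 1 p * f ^ p" .
  show ?case
    using p0 by (simp add: map_poly_pCons power_0_left pcompose_pCons pCons.hyps *)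
qed

section \<open>W2 reduction\<close>

locale W2ctx =
  fixes p :: nat and \<pi> :: "'w::comm_ring_1 \<Rightarrow> 'k::field" and \<sigma> :: "'w \<Rightarrow> 'w" and mp :: "'k \<Rightarrow> 'w"
  assumes W2: "is_W2 p \<pi> \<sigma> mp" and pchar: "CHAR('k) = p" and pprime: "prime p"
begin

lemma pi_add: "\<pi> (a + b) = \<pi> a + \<pi> b" and pi_mul: "\<pi> (a * b) = \<pi> a * \<pi> b" and pi_one: "\<pi> 1 = 1"
  and pi_surj: "surj \<pi>" and pi_ker: "\<pi> a = 0 \<longleftrightarrow> (\<exists>b. a = of_nat p * b)"
  and pi_tor: "of_nat p * a = 0 \<longleftrightarrow> \<pi> a = 0"
  and sig_add: "\<sigma> (a + b) = \<sigma> a + \<sigma> b" and sig_mul: "\<sigma> (a * b) = \<sigma> a * \<sigma> b" and sig_one: "\<sigma> 1 = 1"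
  and pi_sig: "\<pi> (\<sigma> a) = (\<pi> a) ^ p" and mp_pi: "mp (\<pi> a) = of_nat p * a"
  using W2 unfolding is_W2_def by blast+

sublocale pih: rhom \<pi> by unfold_locales (auto simp: pi_add pi_mul pi_one)
sublocale sigh: rhom \<sigma> by unfold_locales (auto simp: sig_add sig_mul sig_one)

lemma pi_pre: obtains a where "c = \<pi> a"
  using pi_surj by (metis surjD)

lemma mp_add: "mp (c + d) = mp c + mp d"
proof -
  obtain a b where ab: "c = \<pi> a" "d = \<pi> b" using pi_pre by metis
  then have "mp (c + d) = mp (\<pi> (a + b))" by (simp add: pi_add)
  also have "\<dots> = of_nat p * a + of_nat p * b" by (simp add: mp_pi algebra_simps)
  finally show ?thesis using ab by (simp add: mp_pi)
qed

lemma mp0[simp]: "mp 0 = 0"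
  using mp_add[of 0 0] by simp

lemma mp_inj: "mp c = mp d \<Longrightarrow> c = d"
proof -
  assume "mp c = mp d"
  obtain a b where ab: "c = \<pi> a" "d = \<pi> b" using pi_pre by metis
  with \<open>mp c = mp d\<close> have "of_nat p * a = of_nat p * b" by (simp add: mp_pi)
  hence "of_nat p * (a - b) = 0" by (simp add: algebra_simps)
  hence "\<pi> (a - b) = 0" using pi_tor by blast
  thus ?thesis using ab by (simp add: pih.hdiff)
qed

lemma mp_ofnat: "mp (of_nat n * c) = of_nat n * mp c"
  by (induct n) (auto simp: mp_add algebra_simps)

lemma mp_ofnat': "mp ((1 + of_nat n) * c) = (1 + of_nat n) * mp c"
  using mp_ofnat[of "Suc n"] by simp

lemma map_mp_inj: "map_poly mp F = map_poly mp G \<Longrightarrow> F = G"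
  by (rule poly_eqI) (metis coeff_map_poly mp0 mp_inj)

lemma map_mp_add: "map_poly mp (F + G) = map_poly mp F + map_poly mp G"
  by (rule poly_eqI) (simp add: coeff_map_poly mp_add)

lemma p_pos: "p > 0" using pprime prime_gt_0_nat by auto

lemma ofnat_pow: "(1 + of_nat n :: 'k) ^ p = 1 + of_nat n"
proof -
  have a: "prime CHAR('k)" "p = CHAR('k)" using pprime pchar by auto
  from of_nat_pow_char[OF a, of "Suc n"] show ?thesis by (simp only: of_nat_Suc)
qed

lemma deriv_reduction:
  fixes A :: "'w poly" and F :: "'k poly"
  assumes hyp: "A ^ p - pcompose (map_poly \<sigma> A) (monom 1 p) = map_poly mp F"
  shows "pderiv F = map_poly \<pi> A ^ (p - 1) * pderiv (map_poly \<pi> A)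
           - pcompose (map_poly (\<lambda>c. c ^ p) (pderiv (map_poly \<pi> A))) (monom 1 p) * monom 1 (p - 1)"
proof -
  define B where "B = A ^ (p - 1) * wder A - pcompose (wder (map_poly \<sigma> A)) (monom 1 p) * monom 1 (p - 1)"
  have pdm: "wder (monom (1::'w) p) = smult (of_nat p) (monom 1 (p - 1))"
    by (simp add: wder_monom smult_monom)
  have "wder (A ^ p - pcompose (map_poly \<sigma> A) (monom 1 p)) = smult (of_nat p) B"
    unfolding B_def wder_diff wder_power wder_pcompose pdm
    by (simp add: algebra_simps smult_diff_right)
  moreover have "wder (map_poly mp F) = map_poly mp (pderiv F)"
    by (rule poly_eqI) (simp add: coeff_map_poly coeff_pderiv coeff_wder mp_ofnat')
  ultimately have eq: "smult (of_nat p) B = map_poly mp (pderiv F)" using hyp by simp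
  have mpiB: "map_poly \<pi> B = pderiv F"
  proof (rule poly_eqI)
    fix j
    obtain a where a: "\<pi> a = coeff (pderiv F) j" using pi_pre by metis

    have "of_nat p * coeff B j = of_nat p * a"
      using arg_cong[OF eq, of "\<lambda>q. coeff q j"] by (simp add: coeff_map_poly a[symmetric] mp_pi)
    hence "of_nat p * (coeff B j - a) = 0" by (simp add: algebra_simps)
    hence "\<pi> (coeff B j - a) = 0" using pi_tor by blast
    thus "coeff (map_poly \<pi> B) j = coeff (pderiv F) j"
      by (simp add: coeff_map_poly pih.hdiff a)
  qed
  have "map_poly \<pi> (wder (map_poly \<sigma> A)) = pderiv (map_poly (\<lambda>c. c ^ p) (map_poly \<pi> A))"
    using p_pos by (simp add: pih.mp_wder wder_pderiv map_poly_map_poly o_def pi_sig power_0_left)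
  also have "\<dots> = map_poly (\<lambda>c. c ^ p) (pderiv (map_poly \<pi> A))"
    using p_pos pprime pchar
    by (intro poly_eqI) (simp add: coeff_pderiv coeff_map_poly power_0_left power_mult_distrib ofnat_pow)
  finally have s: "map_poly \<pi> (wder (map_poly \<sigma> A)) = map_poly (\<lambda>c. c ^ p) (pderiv (map_poly \<pi> A))" .
  have e1: "map_poly \<pi> B = map_poly \<pi> A ^ (p-1) * pderiv (map_poly \<pi> A)
       - pcompose (map_poly \<pi> (wder (map_poly \<sigma> A))) (monom 1 p) * monom 1 (p-1)"
    unfolding B_def pih.mp_diff pih.mp_mult pih.mp_power pih.mp_pcompose_monom pih.mp_monom pi_one
    by (simp add: pih.mp_wder[of A] wder_pderiv)
  show ?thesis using e1 unfolding mpiB s .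
qed

end


section \<open>Derivative on k(x)\<close>

lemma rf_deriv_Fract:
  fixes n m :: "'k::field poly"
  assumes m: "m \<noteq> 0"
  shows "rf_deriv (Fract n m) = Fract (pderiv n * m - n * pderiv m) (m * m)"
proof -
  define Pr where "Pr D \<longleftrightarrow> (\<exists>n' m'. m' \<noteq> 0 \<and> Fract n m = Fract n' m' \<and>
                     D = Fract (pderiv n' * m' - n' * pderiv m') (m' * m'))" for D
  have "Pr (Fract (pderiv n * m - n * pderiv m) (m * m))" unfolding Pr_def using m by blast
  hence "Pr (rf_deriv (Fract n m))" unfolding rf_deriv_def Pr_def[symmetric] by (rule someI)
  then obtain n' m' where m': "m' \<noteq> 0" and e: "Fract n m = Fract n' m'"
    and D: "rf_deriv (Fract n m) = Fract (pderiv n' * m' - n' * pderiv m') (m' * m')"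
    unfolding Pr_def by blast
  from e have h: "n * m' = n' * m" using m m' by (simp add: eq_fract)
  hence h': "pderiv n * m' + n * pderiv m' = pderiv n' * m + n' * pderiv m"
    by (metis pderiv_mult mult.commute add.commute)
  have "(pderiv n' * m' - n' * pderiv m') * (m * m) = (pderiv n * m - n * pderiv m) * (m' * m')"
  proof -
    have "(pderiv n' * m' - n' * pderiv m') * (m * m)
        = m' * m * (pderiv n' * m) - (n' * m) * m * pderiv m'" by (simp add: algebra_simps)
    also have "\<dots> = m' * m * (pderiv n * m' + n * pderiv m' - n' * pderiv m) - (n * m') * m * pderiv m'"
      using h h' by (simp add: algebra_simps)
    also have "\<dots> = (pderiv n * m - n * pderiv m) * (m' * m')"
      using h by (simp add: algebra_simps) (metis (no_types, lifting) mult.assoc mult.commute)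
    finally show ?thesis .
  qed
  thus ?thesis using D m m' by (simp add: eq_fract)
qed

lemma rf_deriv_quot:
  fixes n m :: "'k::field poly"
  assumes m: "m \<noteq> 0"
  shows "rf_deriv (to_fract n / to_fract m) =
     (to_fract (pderiv n) * to_fract m - to_fract n * to_fract (pderiv m)) / (to_fract m * to_fract m)"
  using rf_deriv_Fract[OF m, of n] m by (simp add: Fract_conv_to_fract)

lemma fract_rep: obtains n m :: "'k::field poly" where "m \<noteq> 0" "z = to_fract n / to_fract m"
  by (cases z) (auto simp: Fract_conv_to_fract)

lemma rf_deriv_tf[simp]: "rf_deriv (to_fract (n :: 'k::field poly)) = to_fract (pderiv n)"
  using rf_deriv_quot[of 1 n] by simp

lemma rf_deriv_0[simp]: "rf_deriv (0 :: 'k::field rf) = 0"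
  using rf_deriv_tf[of 0] by simp

lemma rf_deriv_1[simp]: "rf_deriv (1 :: 'k::field rf) = 0"
  using rf_deriv_tf[of 1] by simp

lemma rf_deriv_add: "rf_deriv (z + w :: 'k::field rf) = rf_deriv z + rf_deriv w"
proof -
  obtain a b where b: "b \<noteq> 0" and z: "z = to_fract a / to_fract b" by (rule fract_rep)
  obtain c d where d: "d \<noteq> 0" and w: "w = to_fract c / to_fract d" by (rule fract_rep)
  have "z + w = to_fract (a * d + c * b) / to_fract (b * d)" using b d by (simp add: z w field_simps)
  hence "rf_deriv (z + w) = rf_deriv (to_fract (a * d + c * b) / to_fract (b * d))" by simp
  also have "\<dots> = (to_fract (pderiv (a * d + c * b)) * to_fract (b * d) - to_fract (a * d + c * b) * to_fract (pderiv (b * d)))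
      / (to_fract (b * d) * to_fract (b * d))" by (rule rf_deriv_quot) (simp add: b d)
  finally have e: "rf_deriv (z + w) = (to_fract (pderiv (a * d + c * b)) * to_fract (b * d) - to_fract (a * d + c * b) * to_fract (pderiv (b * d)))
      / (to_fract (b * d) * to_fract (b * d))" .
  show ?thesis unfolding e using b d
    by (simp add: z w rf_deriv_quot pderiv_add pderiv_mult field_simps)
qed

lemma rf_deriv_mult: "rf_deriv (z * w :: 'k::field rf) = rf_deriv z * w + z * rf_deriv w"
proof -
  obtain a b where b: "b \<noteq> 0" and z: "z = to_fract a / to_fract b" by (rule fract_rep)
  obtain c d where d: "d \<noteq> 0" and w: "w = to_fract c / to_fract d" by (rule fract_rep)
  have "z * w = to_fract (a * c) / to_fract (b * d)" using b d by (simp add: z w field_simps)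
  hence "rf_deriv (z * w) = rf_deriv (to_fract (a * c) / to_fract (b * d))" by simp
  also have "\<dots> = (to_fract (pderiv (a * c)) * to_fract (b * d) - to_fract (a * c) * to_fract (pderiv (b * d)))
      / (to_fract (b * d) * to_fract (b * d))" by (rule rf_deriv_quot) (simp add: b d)
  finally have e: "rf_deriv (z * w) = (to_fract (pderiv (a * c)) * to_fract (b * d) - to_fract (a * c) * to_fract (pderiv (b * d)))
      / (to_fract (b * d) * to_fract (b * d))" .
  show ?thesis unfolding e using b d
    by (simp add: z w rf_deriv_quot pderiv_add pderiv_mult field_simps)
qed

lemma rf_deriv_minus: "rf_deriv (- z :: 'k::field rf) = - rf_deriv z"
  using rf_deriv_add[of z "-z"] by (simp add: eq_neg_iff_add_eq_0 add.commute)

lemma rf_deriv_diff: "rf_deriv (z - w :: 'k::field rf) = rf_deriv z - rf_deriv w"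
  using rf_deriv_add[of z "-w"] by (simp add: rf_deriv_minus)

lemma rf_deriv_inverse: "rf_deriv (inverse z :: 'k::field rf) = - rf_deriv z / (z * z)"
proof (cases "z = 0")
  case True then show ?thesis by simp
next
  case False
  obtain a b where b: "b \<noteq> 0" and z: "z = to_fract a / to_fract b" by (rule fract_rep)
  with False have a: "a \<noteq> 0" by auto
  have "inverse z = to_fract b / to_fract a" by (simp add: z)
  thus ?thesis using a b
    by (simp add: z rf_deriv_quot field_simps)
qed

lemma rf_deriv_divide: "rf_deriv (z / w :: 'k::field rf) = (rf_deriv z * w - z * rf_deriv w) / (w * w)"
proof (cases "w = 0")
  case True then show ?thesis by simp
next
  case False
  have "rf_deriv (z / w) = rf_deriv z * inverse w + z * rf_deriv (inverse w)"
    by (simp only: divide_inverse rf_deriv_mult)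
  also have "\<dots> = rf_deriv z * inverse w - z * rf_deriv w / (w * w)"
    by (simp only: rf_deriv_inverse) (simp add: algebra_simps)
  also have "\<dots> = (rf_deriv z * w - z * rf_deriv w) / (w * w)"
    using False by (simp add: field_simps)
  finally show ?thesis .
qed

lemma rf_deriv_power: "rf_deriv (z ^ n :: 'k::field rf) = of_nat n * z ^ (n - 1) * rf_deriv z"
proof (induct n)
  case 0 then show ?case by simp
next
  case (Suc n)
  then show ?case by (cases n) (auto simp: rf_deriv_mult algebra_simps)
qed

definition emb :: "'k::field \<Rightarrow> 'k rf" where "emb c = to_fract [:c:]"

definition ev :: "'k::field poly \<Rightarrow> 'k rf \<Rightarrow> 'k rf" where "ev q z = poly (map_poly emb q) z"

abbreviation X :: "'k::field rf" where "X \<equiv> to_fract [:0, 1:]"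

lemma emb_0[simp]: "emb 0 = 0" by (simp add: emb_def)
lemma emb_eq_0[simp]: "emb c = 0 \<longleftrightarrow> c = 0" by (simp add: emb_def)

interpretation embh: rhom emb
  by unfold_locales (auto simp: emb_def one_pCons[symmetric] to_fract_add[symmetric] to_fract_mult[symmetric]
      simp del: to_fract_add to_fract_mult)

lemma ev_add: "ev (p + q) z = ev p z + ev q z" by (simp add: ev_def embh.mp_add)
lemma ev_diff: "ev (p - q) z = ev p z - ev q z" by (simp add: ev_def embh.mp_diff)
lemma ev_mult: "ev (p * q) z = ev p z * ev q z" by (simp add: ev_def embh.mp_mult)
lemma ev_power: "ev (p ^ n) z = ev p z ^ n" by (simp add: ev_def embh.mp_power)
lemma ev_monom: "ev (monom c n) z = emb c * z ^ n" by (simp add: ev_def embh.mp_monom poly_monom)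
lemma ev_const: "ev [:c:] z = emb c" by (simp add: ev_def map_poly_pCons)
lemma ev_0[simp]: "ev 0 z = 0" by (simp add: ev_def)
lemma ev_1[simp]: "ev 1 z = 1" by (simp add: ev_def embh.mp_one)
lemma ev_pCons: "ev (pCons a q) z = emb a + z * ev q z" by (simp add: ev_def map_poly_pCons)
lemma ev_sum: "ev (sum f A) z = (\<Sum>a\<in>A. ev (f a) z)" by (simp add: ev_def embh.mp_sum poly_sum)

lemma ev_X: "ev q X = to_fract q"
proof (induct q)
  case 0 then show ?case by simp
next
  case (pCons a q)
  have "pCons a q = [:a:] + [:0, 1:] * q" by simp
  hence "to_fract (pCons a q) = to_fract [:a:] + X * to_fract q"
    by (metis to_fract_add to_fract_mult)
  then show ?case using pCons by (simp add: ev_pCons emb_def)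
qed

lemma emb_ofnat: "emb (of_nat n :: 'k::field) = of_nat n"
  by (simp add: emb_def of_nat_poly[symmetric] of_nat_fract Fract_conv_to_fract)

lemma emb_ofnat_Suc: "emb (1 + of_nat n :: 'k::field) = 1 + of_nat n"
  using emb_ofnat[of "Suc n", where 'k='k] by simp

lemma rf_deriv_emb[simp]: "rf_deriv (emb c) = 0"
  by (simp add: emb_def)

lemma pderiv_X[simp]: "pderiv [:0, 1::'k::field:] = 1"
  by (simp add: pderiv_pCons one_pCons[symmetric])

lemma rf_deriv_X[simp]: "rf_deriv X = 1"
  by (simp add: pderiv_pCons one_pCons[symmetric])

lemma rf_deriv_ev: "rf_deriv (ev q z) = ev (pderiv q) z * rf_deriv z"
proof (induct q)
  case 0 then show ?case by simp
next
  case (pCons a q)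
  then show ?case
    by (simp add: ev_pCons rf_deriv_add rf_deriv_mult pderiv_pCons ev_add algebra_simps)
qed

lemma ev_le: "degree f \<le> n \<Longrightarrow> ev f w = (\<Sum>k\<le>n. emb (coeff f k) * w ^ k)"
proof -
  assume "degree f \<le> n"
  hence "ev f w = ev (\<Sum>k\<le>n. monom (coeff f k) k) w" by (simp add: poly_as_sum_of_monoms')
  thus ?thesis by (simp add: ev_sum ev_monom)
qed

lemma ev_refl:
  assumes "degree f \<le> n" "z \<noteq> 0"
  shows "ev (reflN n f) z = z ^ n * ev f (inverse z)"
proof -
  have "ev (reflN n f) z = (\<Sum>k\<le>n. emb (coeff f k) * z ^ (n - k))"
    by (simp add: reflN_def ev_sum ev_monom)
  also have "\<dots> = (\<Sum>k\<le>n. z ^ n * (emb (coeff f k) * inverse z ^ k))"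
  proof (intro sum.cong refl)
    fix k assume "k \<in> {..n}"
    hence "z ^ n = z ^ (n - k) * z ^ k" by (simp flip: power_add)
    thus "emb (coeff f k) * z ^ (n - k) = z ^ n * (emb (coeff f k) * inverse z ^ k)"
      using assms(2) by (simp add: field_simps)
  qed
  also have "\<dots> = z ^ n * ev f (inverse z)"
    by (simp add: ev_le[OF assms(1)] sum_distrib_left)
  finally show ?thesis .
qed

lemma of_nat_rf: "(of_nat n :: 'k::field rf) = to_fract [:of_nat n:]"
  by (metis emb_def emb_ofnat)

lemma CHAR_rf: "CHAR('k::field rf) = CHAR('k)"
  by (rule CHAR_eqI) (auto simp: of_nat_rf of_nat_eq_0_iff_char_dvd)


section \<open>Closed forms for the function field operations\<close>

context
  fixes Pb :: "'k::field poly"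
begin

lemma hf_pow_r: "hf_pow Pb (a, 0) n = (a ^ n, 0)"
  by (induct n) (auto simp: hf_pow_def hf_one_def hf_mult_def)

lemma hf_pow_Suc: "hf_pow Pb z (Suc n) = hf_mult Pb z (hf_pow Pb z n)"
  by (simp add: hf_pow_def)

lemma hf_pow_i_even: "hf_pow Pb (0, b) (2 * n) = ((b * b * to_fract Pb) ^ n, 0)"
proof (induct n)
  case 0 then show ?case by (simp add: hf_pow_def hf_one_def)
next
  case (Suc n)
  have "2 * Suc n = Suc (Suc (2 * n))" by simp
  then show ?case using Suc by (simp only: hf_pow_Suc) (simp add: hf_mult_def algebra_simps)
qed

lemma hf_pow_i_odd: "hf_pow Pb (0, b) (Suc (2 * n)) = (0, b * (b * b * to_fract Pb) ^ n)"
  by (simp only: hf_pow_Suc hf_pow_i_even) (simp add: hf_mult_def)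

lemma hf_inv_r: "hf_inv Pb (a, 0) = (inverse a, 0)"
  by (simp add: hf_inv_def Let_def field_simps)

lemma hf_inv_i: "hf_inv Pb (0, b) = (0, inverse (b * to_fract Pb))"
  by (cases "b * to_fract Pb = 0") (auto simp: hf_inv_def Let_def field_simps)

lemma hf_poly_r: "hf_poly Pb q (a, 0) = (ev q a, 0)"
proof -
  have gen: "foldr (\<lambda>i acc. hf_add (hf_mult Pb (hf_const (coeff q i)) (hf_pow Pb (a, 0) i)) acc) xs (0, 0)
        = (\<Sum>i\<leftarrow>xs. emb (coeff q i) * a ^ i, 0)" for xs
    by (induct xs) (auto simp: hf_add_def hf_mult_def hf_const_def hf_pow_r emb_def)
  have "ev q a = (\<Sum>i\<le>degree q. emb (coeff q i) * a ^ i)" by (rule ev_le) simp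
  also have "\<dots> = (\<Sum>i\<leftarrow>[0..<Suc (degree q)]. emb (coeff q i) * a ^ i)"
    by (simp add: sum_list_distinct_conv_sum_set atLeast0AtMost lessThan_Suc_atMost atLeast0LessThan del: upt_Suc)
  finally show ?thesis unfolding hf_poly_def gen by simp
qed

lemma hf_x1_eq: "hf_x1 Pb = (inverse X, 0)"
  by (simp add: hf_x1_def hf_x_def hf_inv_r)

lemma hf_d_r: "hf_d Pb (a, 0) = (rf_deriv a, 0)"
  by (simp add: hf_d_def)

lemma hf_d_i: "hf_d Pb (0, b) = (0, rf_deriv b + b * to_fract (pderiv Pb) / (2 * to_fract Pb))"
  by (simp add: hf_d_def)

end


lemma rf_deriv_Y: "rf_deriv (inverse X :: 'k::field rf) = - (inverse X * inverse X)"
  by (subst rf_deriv_inverse) (simp add: field_simps)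

lemma OmegaU_mem: "(0, to_fract c) \<in> Omega_U (Pb :: 'k::field poly)"
proof -
  have "(0, to_fract c) = hf_add (hf_mult Pb (to_fract 0, to_fract c) (hf_d Pb hf_x))
            (hf_mult Pb (to_fract 0, to_fract 0) (hf_d Pb hf_y))"
    by (simp add: hf_x_def hf_d_r hf_add_def hf_mult_def pderiv_pCons one_pCons[symmetric])
  moreover have "(to_fract 0, to_fract c) \<in> O_U Pb" "(to_fract 0, to_fract (0::'k poly)) \<in> O_U Pb"
    unfolding O_U_def by blast+
  ultimately show ?thesis unfolding Omega_U_def by blast
qed

lemma OmegaV_mem:
  "(0, - (ev B (inverse X) * inverse X ^ (g + 3))) \<in> Omega_V (Pb :: 'k::field poly) g"
proof -
  define a where "a = hf_add (hf_poly Pb 0 (hf_x1 Pb)) (hf_mult Pb (hf_poly Pb B (hf_x1 Pb)) (hf_t Pb g))"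
  define b where "b = hf_add (hf_poly Pb 0 (hf_x1 Pb)) (hf_mult Pb (hf_poly Pb 0 (hf_x1 Pb)) (hf_t Pb g))"
  have t: "hf_t Pb g = (0, inverse X ^ (g + 1))"
    by (simp add: hf_t_def hf_x1_eq hf_pow_r hf_y_def hf_mult_def)
  have a: "a = (0, ev B (inverse X) * inverse X ^ (g + 1))"
    by (simp add: a_def t hf_x1_eq hf_poly_r hf_mult_def hf_add_def)
  have b: "b = (0, 0)"
    by (simp add: b_def t hf_x1_eq hf_poly_r hf_mult_def hf_add_def)
  have "(0, - (ev B (inverse X) * inverse X ^ (g + 3))) =
        hf_add (hf_mult Pb a (hf_d Pb (hf_x1 Pb))) (hf_mult Pb b (hf_d Pb (hf_t Pb g)))"
    by (simp add: a b hf_x1_eq hf_d_r rf_deriv_Y hf_mult_def hf_add_def power_add power3_eq_cube mult_ac)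
  moreover have "a \<in> O_V Pb g" "b \<in> O_V Pb g" unfolding O_V_def a_def b_def by blast+
  ultimately show ?thesis unfolding Omega_V_def by blast
qed

lemma OUV_mem: "(0, to_fract c * inverse X ^ n) \<in> O_UV (Pb :: 'k::field poly)"
proof -
  have "(0, to_fract c * inverse X ^ n) = hf_mult Pb (to_fract 0, to_fract c) (hf_pow Pb (hf_x1 Pb) n)"
    by (simp add: hf_x1_eq hf_pow_r hf_mult_def)
  moreover have "(to_fract 0, to_fract c) \<in> O_U Pb" unfolding O_U_def by blast
  ultimately show ?thesis unfolding O_UV_def by blast
qed


context W2ctx
begin

lemma ofnat_p_0: "(of_nat p :: 'k) = 0"
  using of_nat_CHAR[where 'a='k] pchar by simp

lemma C_identity:
  fixes A :: "'w poly" and u \<alpha> Ab :: "'k poly"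
  assumes Ab: "Ab = map_poly \<pi> A"
  and hyp: "A ^ p - pcompose (map_poly \<sigma> A) (monom 1 p) = map_poly mp (pderiv Ab ^ p * u - 2 * \<alpha> * Ab ^ p)"
  and pr: "p = Suc (2 * r)"
  shows "pderiv Ab ^ p * (monom 1 (2 * r) + pderiv u) = Ab ^ (2 * r) * (pderiv Ab + 2 * pderiv \<alpha> * Ab)"
proof -
  have dr: "pderiv (pderiv Ab ^ p * u - 2 * \<alpha> * Ab ^ p) =
      Ab ^ (p - 1) * pderiv Ab - pcompose (map_poly (\<lambda>c. c ^ p) (pderiv Ab)) (monom 1 p) * monom 1 (p - 1)"
    using deriv_reduction[OF hyp] Ab by simp
  have fr: "pcompose (map_poly (\<lambda>c. c ^ p) (pderiv Ab)) (monom 1 p) = pderiv Ab ^ p"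
    by (rule frob_poly) (use pprime pchar in auto)
  have z: "smult (of_nat p) q = 0" for q :: "'k poly" by (simp add: ofnat_p_0)
  have "pderiv (pderiv Ab ^ p * u - 2 * \<alpha> * Ab ^ p) = pderiv Ab ^ p * pderiv u - 2 * pderiv \<alpha> * Ab ^ p"
    by (simp add: pderiv_diff pderiv_mult pderiv_power z)
  hence "pderiv Ab ^ p * pderiv u - 2 * pderiv \<alpha> * Ab ^ p = Ab ^ (2 * r) * pderiv Ab - pderiv Ab ^ p * monom 1 (2 * r)"
    using dr fr pr by simp
  thus ?thesis using pr by (simp add: algebra_simps)
qed

end


lemma to_fract_power: "to_fract (q ^ n) = to_fract q ^ n"
  by (induct n) auto

lemma tf_monom1: "to_fract (monom (1::'k::field) n) = X ^ n"
  by (simp add: monom_altdef to_fract_power)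

lemma tf_smult: "to_fract (smult c q) = emb c * to_fract (q :: 'k::field poly)"
  by (simp add: emb_def flip: to_fract_mult)

lemma X_ne0[simp]: "(X :: 'k::field rf) \<noteq> 0" by simp

lemma XY_pow: "X ^ n * inverse X ^ n = (1 :: 'k::field rf)"
  by (simp add: power_inverse[symmetric] field_simps)


section \<open>Bezout for polynomials over a field\<close>

lemma bez_field:
  fixes a b :: "'k::field poly"
  assumes "coprime a b" shows "\<exists>s t. s * a + t * b = 1"
  using assms
proof (induction "euclidean_size b" arbitrary: a b rule: less_induct)
  case less
  show ?case
  proof (cases "b = 0")
    case True
    with less.prems have "is_unit a" by simp
    then obtain s where "1 = a * s" by (meson dvdE)
    thus ?thesis by (metis mult.commute mult_zero_left add_0_right)
  next
    case False
    have "coprime b (a mod b)"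
    proof (rule coprimeI)
      fix c assume "c dvd b" "c dvd a mod b"
      hence "c dvd a div b * b + a mod b" using \<open>c dvd b\<close> by (intro dvd_add dvd_mult)
      hence "c dvd a" by (simp only: div_mult_mod_eq)
      thus "is_unit c" using coprime_common_divisor[OF less.prems _ \<open>c dvd b\<close>] by blast
    qed
    moreover have "euclidean_size (a mod b) < euclidean_size b" using False by (rule mod_size_less)
    ultimately obtain s t where st: "s * b + t * (a mod b) = 1" using less.hyps by blast
    have am: "a mod b = a - a div b * b" using div_mult_mod_eq[of a b] by (simp add: algebra_simps)
    have "t * a + (s - t * (a div b)) * b = s * b + t * (a - a div b * b)"
      by (simp add: algebra_simps)
    also have "\<dots> = 1" using st am by simp
    finally show ?thesis by blast
  qed
qed

lemma bez_coprime: "s * a + t * b = 1 \<Longrightarrow> coprime a (b :: 'k::field poly)"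
  by (rule coprimeI) (metis dvd_add dvd_mult)

lemma cop_dvd:
  fixes a b c :: "'k::field poly"
  assumes "coprime a b" "a dvd b * c" shows "a dvd c"
proof -
  obtain s t where "s * a + t * b = 1" using bez_field[OF assms(1)] by blast
  hence "c = (s * a + t * b) * c" by simp
  also have "\<dots> = s * c * a + t * (b * c)" by (simp add: algebra_simps)
  also have "a dvd \<dots>" using assms(2) by (intro dvd_add) (auto intro: dvd_mult)
  finally show ?thesis .
qed

lemma cop_pow_left:
  fixes a b :: "'k::field poly"
  assumes "coprime a b" shows "coprime (a ^ m) b"
proof (induct m)
  case 0 then show ?case by simp
next
  case (Suc m)
  obtain s t where st: "s * a + t * b = 1" using bez_field[OF assms] by blast
  obtain s1 t1 where st1: "s1 * a ^ m + t1 * b = 1" using bez_field[OF Suc] by blast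
  have "(s1 * s) * a ^ Suc m + (t1 * (s * a + t * b) + s1 * a ^ m * t) * b
        = (s1 * a ^ m + t1 * b) * (s * a + t * b)" by (simp add: algebra_simps)
  also have "\<dots> = 1" using st st1 by simp
  finally show ?case by (rule bez_coprime)
qed

lemma cop_pow:
  fixes a b :: "'k::field poly"
  assumes "coprime a b" shows "coprime (a ^ m) (b ^ n)"
  using cop_pow_left[OF assms, of m] cop_pow_left[of b "a ^ m" n]
  by (simp add: coprime_commute)

lemma coprime_reflN:
  fixes Pb :: "'k::field poly"
  assumes cop: "coprime Pb (pderiv Pb)" and deg: "degree Pb = d" and lc: "lead_coeff Pb = 1"
    and d1: "d \<ge> 1"
  shows "coprime (reflN (Suc d) Pb) (pderiv (reflN (Suc d) Pb))"
proof -
  define Q where "Q = reflN (Suc d) Pb"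
  define Y where "Y = inverse (X :: 'k rf)"
  have XY: "X * Y = 1" and Y0: "Y \<noteq> 0" and invY: "inverse Y = X" by (auto simp: Y_def)
  have "ev Q X = X ^ Suc d * ev Pb Y"
    unfolding Q_def Y_def by (rule ev_refl) (auto simp: deg)
  hence tfQ: "to_fract Q = X ^ Suc d * ev Pb Y" by (simp add: ev_X)
  have YX: "Y ^ n * X ^ n = 1" for n using XY_pow[of n] by (simp add: Y_def mult.commute)
  have evP: "ev Pb Y = Y ^ Suc d * to_fract Q"
    using YX[of "Suc d"] by (simp add: tfQ mult.assoc[symmetric])
  have Yd: "Y ^ d = Y * Y ^ (d - 1)" "Y ^ Suc d = Y * Y * Y ^ (d - 1)"
    using d1 by (cases d, auto simp: algebra_simps)+
  have dY: "rf_deriv Y = - (Y * Y)" unfolding Y_def by (rule rf_deriv_Y)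
  have "ev (pderiv Pb) Y * (- (Y * Y)) =
        of_nat (Suc d) * Y ^ d * (- (Y * Y)) * to_fract Q + Y ^ Suc d * to_fract (pderiv Q)"
  proof -
    have pw: "rf_deriv (Y ^ Suc d) = of_nat (Suc d) * Y ^ d * rf_deriv Y"
      using rf_deriv_power[of Y "Suc d"] by (simp del: power_Suc of_nat_Suc)
    show ?thesis
      using arg_cong[OF evP, of rf_deriv] by (simp only: rf_deriv_ev dY rf_deriv_mult pw rf_deriv_tf)
  qed
  moreover have "Y ^ Suc d = Y ^ (d - 1) * (Y * Y)"
    using d1 by (cases d) (auto simp: algebra_simps)
  ultimately have "(ev (pderiv Pb) Y - (of_nat (Suc d) * Y ^ d * to_fract Q - Y ^ (d - 1) * to_fract (pderiv Q))) * (Y * Y) = 0"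
    by (simp add: algebra_simps Yd(1))
  hence evP': "ev (pderiv Pb) Y = of_nat (Suc d) * Y ^ d * to_fract Q - Y ^ (d - 1) * to_fract (pderiv Q)"
    using Y0 by simp
  obtain a b where ab: "a * Pb + b * pderiv Pb = 1"
    using bez_field[OF cop] by blast
  define m where "m = max (degree a) (degree b)"
  have "ev (reflN m a) X = X ^ m * ev a Y" unfolding Y_def by (rule ev_refl) (auto simp: m_def)
  hence A: "ev a Y = Y ^ m * to_fract (reflN m a)"
    using YX[of m] by (simp add: ev_X mult.assoc[symmetric])
  have "ev (reflN m b) X = X ^ m * ev b Y" unfolding Y_def by (rule ev_refl) (auto simp: m_def)
  hence B: "ev b Y = Y ^ m * to_fract (reflN m b)"
    using YX[of m] by (simp add: ev_X mult.assoc[symmetric])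
  have one: "1 = ev a Y * ev Pb Y + ev b Y * ev (pderiv Pb) Y"
    using arg_cong[OF ab, of "\<lambda>q. ev q Y"] by (simp add: ev_add ev_mult)
  define tA tB tQ tQ' where "tA = to_fract (reflN m a)" "tB = to_fract (reflN m b)"
     "tQ = to_fract Q" "tQ' = to_fract (pderiv Q)"
  define c where "c = (of_nat (Suc d) :: 'k rf)"
  define K where "K = (X :: 'k rf) ^ m * X ^ (d - 1)"
  have KYZ: "K * Y ^ m * Y ^ (d - 1) = 1"
  proof -
    have kk: "K * Y ^ m * Y ^ (d - 1) = (Y ^ m * X ^ m) * (Y ^ (d - 1) * X ^ (d - 1))"
      unfolding K_def by (simp add: algebra_simps)
    show ?thesis unfolding kk YX by simp
  qed
  have "K * X * X = K * X * X * (Y ^ m * tA * (Y * Y * Y ^ (d - 1)) * tQ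
        + Y ^ m * tB * (c * (Y * Y ^ (d - 1)) * tQ - Y ^ (d - 1) * tQ'))"
    using one unfolding A B evP evP' tA_tB_tQ_tQ'_def c_def Yd by (simp add: mult_ac)
  also have "\<dots> = (K * Y ^ m * Y ^ (d - 1)) * ((X * Y) * (X * Y) * tA * tQ
        + tB * (c * (X * Y) * X * tQ - X * X * tQ'))"
    by (simp add: algebra_simps)
  also have "\<dots> = tA * tQ + tB * (c * X * tQ - X * X * tQ')"
    by (simp only: KYZ XY mult_1_left mult_1_right)
  finally have e: "K * X * X = tA * tQ + tB * (c * X * tQ - X * X * tQ')" .
  define N where "N = m + (d - 1) + 2"
  have "K * X * X = X ^ N" unfolding K_def N_def by (simp add: power_add power2_eq_square algebra_simps)
  hence "to_fract (monom 1 N) = to_fract (reflN m a * Q + reflN m b *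
            (smult (of_nat (Suc d)) (monom 1 1 * Q) - monom 1 2 * pderiv Q))"
    using e by (simp add: tf_monom1 tf_smult emb_ofnat emb_ofnat_Suc tA_tB_tQ_tQ'_def c_def power2_eq_square mult_ac)
  hence L: "monom 1 N = reflN m a * Q + reflN m b *
            (smult (of_nat (Suc d)) (monom 1 1 * Q) - monom 1 2 * pderiv Q)"
    by (simp only: to_fract_eq_iff)
  have c0: "coeff (pderiv Q) 0 = 1"
    using lc deg by (simp add: coeff_pderiv Q_def coeff_refl)
  obtain s where s: "pderiv Q = pCons 1 s"
    using c0 by (cases "pderiv Q") auto
  have "1 = pderiv Q - monom 1 1 * s"
    unfolding s by (rule poly_eqI) (auto simp: coeff_pCons coeff_monom_mult split: nat.splits)
  hence "coprime (monom (1::'k) 1) (pderiv Q)"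
    by (intro coprimeI) (metis dvd_diff dvd_mult2 )
  hence cN: "coprime (monom (1::'k) N) (pderiv Q)"
    using cop_pow[of "monom 1 1" "pderiv Q" N 1] monom_power[of "1::'k" 1 N] by simp
  show ?thesis
    unfolding Q_def[symmetric]
  proof (rule coprimeI)
    fix c assume "c dvd Q" "c dvd pderiv Q"
    hence "c dvd monom 1 N" unfolding L
      by (intro dvd_add dvd_mult dvd_diff dvd_smult) auto
    thus "is_unit c" using coprime_common_divisor[OF cN _ \<open>c dvd pderiv Q\<close>] by blast
  qed
qed


lemma ev_refl_deriv:
  fixes f g :: "'k::field poly"
  assumes g: "g = reflN (Suc d) f" and deg: "degree f \<le> Suc d" and d1: "d \<ge> 1"
  shows "ev f (inverse X) = inverse X ^ Suc d * to_fract g"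
    and "ev (pderiv f) (inverse X) = of_nat (Suc d) * inverse X ^ d * to_fract g
            - inverse X ^ (d - 1) * to_fract (pderiv g)"
proof -
  define Y where "Y = inverse (X :: 'k rf)"
  have XY: "X * Y = 1" and Y0: "Y \<noteq> 0" and invY: "inverse Y = X" by (auto simp: Y_def)
  have "ev g X = X ^ Suc d * ev f Y"
    unfolding g Y_def by (rule ev_refl) (auto simp: deg)
  hence tfQ: "to_fract g = X ^ Suc d * ev f Y" by (simp add: ev_X)
  have YX: "Y ^ n * X ^ n = 1" for n using XY_pow[of n] by (simp add: Y_def mult.commute)
  have evP: "ev f Y = Y ^ Suc d * to_fract g"
    using YX[of "Suc d"] by (simp add: tfQ mult.assoc[symmetric])
  thus "ev f (inverse X) = inverse X ^ Suc d * to_fract g" by (simp add: Y_def)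
  have Yd: "Y ^ d = Y * Y ^ (d - 1)" "Y ^ Suc d = Y * Y * Y ^ (d - 1)"
    using d1 by (cases d, auto simp: algebra_simps)+
  have dY: "rf_deriv Y = - (Y * Y)" unfolding Y_def by (rule rf_deriv_Y)
  have "ev (pderiv f) Y * (- (Y * Y)) =
        of_nat (Suc d) * Y ^ d * (- (Y * Y)) * to_fract g + Y ^ Suc d * to_fract (pderiv g)"
  proof -
    have pw: "rf_deriv (Y ^ Suc d) = of_nat (Suc d) * Y ^ d * rf_deriv Y"
      using rf_deriv_power[of Y "Suc d"] by (simp del: power_Suc of_nat_Suc)
    show ?thesis
      using arg_cong[OF evP, of rf_deriv] by (simp only: rf_deriv_ev dY rf_deriv_mult pw rf_deriv_tf)
  qed
  moreover have "Y ^ Suc d = Y ^ (d - 1) * (Y * Y)"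
    using d1 by (cases d) (auto simp: algebra_simps)
  ultimately have "(ev (pderiv f) Y - (of_nat (Suc d) * Y ^ d * to_fract g - Y ^ (d - 1) * to_fract (pderiv g))) * (Y * Y) = 0"
    by (simp add: algebra_simps Yd(1))
  thus "ev (pderiv f) (inverse X) = of_nat (Suc d) * inverse X ^ d * to_fract g
            - inverse X ^ (d - 1) * to_fract (pderiv g)"
    using Y0 by (simp add: Y_def)
qed

lemma fr_minus:
  assumes "prime CHAR('k::field)" "p = CHAR('k)" "odd p"
  shows "(a - b :: 'k rf) ^ p = a ^ p - b ^ p"
proof -
  have "(a + (- b)) ^ p = a ^ p + (- b) ^ p"
    by (rule freshmans_dream) (use assms in \<open>auto simp: CHAR_rf\<close>)
  thus ?thesis using assms(3) by (simp add: power_minus_odd)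
qed

lemma tf_2: "to_fract (2 :: 'k::field poly) = 2"
  using to_fract_add[of "1::'k poly" 1] by simp

lemma ev_minus: "ev (- q) z = - ev q (z :: 'k::field rf)"
  using ev_diff[of 0 q z] by simp

lemma ev_2: "ev 2 z = (2 :: 'k::field rf)"
  using ev_add[of 1 1 z] by simp

lemma degree_le_map_mp:
  assumes "\<And>c. h c = 0 \<Longrightarrow> c = 0" "h 0 = 0"
  shows "degree F \<le> degree (map_poly h F)"
proof (cases "F = 0")
  case True then show ?thesis by simp
next
  case False
  hence "lead_coeff F \<noteq> 0" by simp
  hence "h (lead_coeff F) \<noteq> 0" using assms(1) by blast
  hence "coeff (map_poly h F) (degree F) \<noteq> 0" using assms(2) by (simp add: coeff_map_poly)
  thus ?thesis by (rule le_degree)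
qed


theorem mainTheorem13:
  fixes p g i :: nat
    and \<pi> :: "'w::comm_ring_1 \<Rightarrow> 'k::field" and \<sigma> :: "'w \<Rightarrow> 'w" and mp :: "'k \<Rightarrow> 'w"
    and P2 :: "'w poly" and u \<alpha> v \<beta> :: "'k poly"
  defines "Pb \<equiv> map_poly \<pi> P2"
  defines "Q2 \<equiv> monom 1 1 * reflect_poly P2"
  defines "Qb \<equiv> monom 1 1 * reflect_poly Pb"
  assumes k_fin: "finite (UNIV :: 'k set)"
    and p_char: "CHAR('k) = p" and p_ne2: "p \<noteq> 2"
    and W2: "is_W2 p \<pi> \<sigma> mp"
    and P2_monic: "lead_coeff P2 = 1" and P2_deg: "degree P2 = 2 * g + 1"
    and Pb_sep: "coprime Pb (pderiv Pb)"
    and hu: "P2 ^ p - pcompose (map_poly \<sigma> P2) (monom 1 p)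
               = map_poly mp (pderiv Pb ^ p * u - 2 * \<alpha> * Pb ^ p)"
    and hv: "Q2 ^ p - pcompose (map_poly \<sigma> Q2) (monom 1 p)
               = map_poly mp (pderiv Qb ^ p * v - 2 * \<beta> * Qb ^ p)"
    and hi: "i \<le> g - 1" "g \<ge> 1"
  defines "x \<equiv> hf_x :: 'k hf"
  defines "y \<equiv> hf_y :: 'k hf"
  defines "x1 \<equiv> hf_x1 Pb"
  defines "t \<equiv> hf_t Pb g"
  defines "mul \<equiv> hf_mult Pb" and "pw \<equiv> hf_pow Pb" and "iv \<equiv> hf_inv Pb"
  defines "fU \<equiv> mul (mul (mul (pw x (i * p))
                        (hf_add (pw x (p - 1)) (hf_poly Pb (pderiv u) x)))
                        (iv (pw y (p - 1))))
                   (mul (hf_d Pb x) (iv y))"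
  defines "fV \<equiv> hf_neg (mul (mul (mul (pw x1 (p * (g - 1 - i)))
                        (hf_add (pw x1 (p - 1)) (hf_poly Pb (pderiv v) x1)))
                        (iv (pw t (p - 1))))
                   (mul (hf_d Pb x1) (iv t)))"
  defines "h \<equiv> mul (mul (pw x (i * p))
                     (hf_add (hf_poly Pb u x) (mul (pw x (2 * p)) (hf_poly Pb v x1))))
                   (iv (pw y p))"
  shows "fU \<in> Omega_U Pb \<and> fV \<in> Omega_V Pb g \<and> h \<in> O_UV Pb
         \<and> hf_add (hf_add fV (hf_neg fU)) (hf_d Pb h) = (0, 0)"
proof -
  have pprime: "prime p"
    using p_char k_fin prime_CHAR_semidom finite_imp_CHAR_pos by metis
  interpret W: W2ctx p \<pi> \<sigma> mp using W2 p_char pprime by unfold_locales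
  have "p > 2" using prime_ge_2_nat[OF pprime] p_ne2 by linarith
  hence "odd p" using pprime prime_odd_nat by blast
  then obtain r where pr: "p = Suc (2 * r)" by (metis oddE Suc_eq_plus1)
  have r1: "r \<ge> 1" using \<open>p > 2\<close> pr by simp
  define d where "d = 2 * g + 1"
  have d1: "d \<ge> 1" by (simp add: d_def)
  have pi0: "\<pi> 0 = 0" by simp
  have coeffPb: "coeff Pb n = \<pi> (coeff P2 n)" for n unfolding Pb_def by (simp add: coeff_map_poly)
  have degPb: "degree Pb = d"
    unfolding Pb_def d_def using P2_deg P2_monic W.pi_one by (subst map_poly_degree_eq) auto
  have lcPb: "lead_coeff Pb = 1" using degPb P2_deg P2_monic W.pi_one by (simp add: coeffPb d_def)
  have Pb0: "Pb \<noteq> 0" using lcPb by auto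
  have Q2r: "Q2 = reflN (Suc d) P2" unfolding Q2_def by (rule refl_reflect) (simp add: P2_deg d_def)
  have Qbr: "Qb = reflN (Suc d) Pb" unfolding Qb_def by (rule refl_reflect) (simp add: degPb)
  have Qbm: "map_poly \<pi> Q2 = Qb" by (simp add: Q2r Qbr refl_map_poly Pb_def)
  have degP2: "degree P2 = d" using P2_deg d_def by simp
  have C1: "pderiv Pb ^ p * (monom 1 (2*r) + pderiv u) = Pb ^ (2*r) * (pderiv Pb + 2 * pderiv \<alpha> * Pb)"
    by (rule W.C_identity[OF Pb_def[THEN meta_eq_to_obj_eq] hu pr])
  have C2: "pderiv Qb ^ p * (monom 1 (2*r) + pderiv v) = Qb ^ (2*r) * (pderiv Qb + 2 * pderiv \<beta> * Qb)"
    by (rule W.C_identity[OF Qbm[symmetric] hv pr])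
  have copQ: "coprime Qb (pderiv Qb)" unfolding Qbr by (rule coprime_reflN[OF Pb_sep degPb lcPb d1])
  have "Pb ^ (2*r) dvd pderiv Pb ^ p * (monom 1 (2*r) + pderiv u)" unfolding C1 by simp
  hence "Pb ^ (2*r) dvd (monom 1 (2*r) + pderiv u)" by (rule cop_dvd[OF cop_pow[OF Pb_sep]])
  then obtain c1 where c1: "monom 1 (2*r) + pderiv u = Pb ^ (2*r) * c1" by (elim dvdE)
  have "Qb ^ (2*r) dvd pderiv Qb ^ p * (monom 1 (2*r) + pderiv v)" unfolding C2 by simp
  hence "Qb ^ (2*r) dvd (monom 1 (2*r) + pderiv v)" by (rule cop_dvd[OF cop_pow[OF copQ]])
  then obtain c2 where c2: "monom 1 (2*r) + pderiv v = Qb ^ (2*r) * c2" by (elim dvdE)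
  define F where "F = pderiv Pb ^ p * u - 2 * \<alpha> * Pb ^ p"
  define G where "G = pderiv Qb ^ p * v - 2 * \<beta> * Qb ^ p"
  define N where "N = Suc d * p"
  have dP2: "degree P2 \<le> Suc d" using degP2 by simp
  have dsP2: "degree (map_poly \<sigma> P2) \<le> Suc d" using map_poly_degree_leq[of \<sigma> P2] dP2 by linarith
  have "Q2 ^ p - pcompose (map_poly \<sigma> Q2) (monom 1 p) = reflN N (P2 ^ p - pcompose (map_poly \<sigma> P2) (monom 1 p))"
    unfolding N_def refl_diff Q2r refl_power[OF dP2] refl_pcompose[OF dsP2] refl_map_poly[of \<sigma>, OF W.sigh.h0] ..
  also have "\<dots> = map_poly mp (reflN N F)" unfolding hu F_def by (simp add: refl_map_poly)
  finally have "map_poly mp G = map_poly mp (reflN N F)" using hv G_def by simp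
  hence GF: "G = reflN N F" by (rule W.map_mp_inj)
  have one_ne: "(1::'w) \<noteq> 0" using W.pi_one by (metis W.pih.h0 one_neq_zero)
  have "degree (map_poly mp F) \<le> N"
  proof -
    have "degree (P2 ^ p) \<le> N" using degree_power_le[of P2 p] dP2 unfolding N_def
      by (meson le_trans mult_le_mono1)
    moreover have "degree (pcompose (map_poly \<sigma> P2) (monom (1::'w) p)) \<le> N"
      using degree_pcompose_le[of "map_poly \<sigma> P2" "monom (1::'w) p"] degree_monom_le[of "1::'w" p] dsP2
      unfolding N_def by (meson le_trans mult_le_mono)
    ultimately show ?thesis using hu degree_diff_le_max[of "P2 ^ p" "pcompose (map_poly \<sigma> P2) (monom 1 p)"]
      unfolding F_def by simp
  qed
  moreover have "degree F \<le> degree (map_poly mp F)"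
    by (rule degree_le_map_mp) (use W.mp_inj in \<open>auto\<close>)
  ultimately have degF: "degree F \<le> N" by linarith
  define Y where "Y = inverse (X :: 'k rf)"
  have XY: "X * Y = 1" and Y0: "Y \<noteq> 0" and invY: "inverse Y = X" by (auto simp: Y_def)
  have YX: "Y ^ n * X ^ n = 1" for n using XY_pow[of n] by (simp add: Y_def mult.commute)
  define P where "P = to_fract Pb"
  define P' where "P' = to_fract (pderiv Pb)"
  define U where "U = to_fract u"
  define A where "A = to_fract \<alpha>"
  define V where "V = ev v Y"
  define Bv where "Bv = ev \<beta> Y"
  define cd where "cd = (of_nat (Suc d) :: 'k rf)"
  have P0: "P \<noteq> 0" using Pb0 by (simp add: P_def)
  have PQ: "Pb = reflN (Suc d) Qb"
    unfolding Qbr by (rule poly_eqI) (auto simp: coeff_refl degPb coeff_eq_0)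
  have dQ: "degree Qb \<le> Suc d" unfolding Qbr by (rule degree_refl)
  have evQ: "ev Qb Y = Y ^ Suc d * P" and evQ': "ev (pderiv Qb) Y = cd * Y ^ d * P - Y ^ (d - 1) * P'"
    using ev_refl_deriv[OF PQ dQ d1] by (simp_all add: Y_def P_def P'_def cd_def)
  have evG: "ev G Y = Y ^ N * to_fract F"
    using ev_refl[OF degF Y0] unfolding GF invY ev_X .
  have pr2: "prime CHAR('k)" "p = CHAR('k)" using pprime p_char by auto
  have E0: "Y ^ N * (P' ^ p * U - 2 * A * P ^ p)
      = (cd * Y ^ d * P) ^ p * V - (Y ^ (d - 1) * P') ^ p * V - 2 * Bv * (Y ^ Suc d * P) ^ p"
  proof -
    have "ev G Y = (cd * Y ^ d * P - Y ^ (d - 1) * P') ^ p * V - 2 * Bv * (Y ^ Suc d * P) ^ p"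
      unfolding G_def by (simp add: ev_diff ev_mult ev_power ev_2 evQ evQ' V_def Bv_def)
    also have "\<dots> = (cd * Y ^ d * P) ^ p * V - (Y ^ (d - 1) * P') ^ p * V - 2 * Bv * (Y ^ Suc d * P) ^ p"
      unfolding fr_minus[OF pr2 \<open>odd p\<close>] by (simp add: algebra_simps)
    finally show ?thesis using evG unfolding F_def
      by (simp add: P_def P'_def U_def A_def to_fract_power tf_2)
  qed
  have KEY: "P' ^ p * (U + X ^ (2 * p) * V) = P ^ p * (2 * A + cd ^ p * X ^ p * V - 2 * Bv)"
  proof -
    define a1 where "a1 = Y ^ (d * p)"
    define a2 where "a2 = Y ^ ((d - 1) * p)"
    have YN: "Y ^ N = a1 * Y ^ p" unfolding N_def a1_def by (simp add: power_add algebra_simps)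
    have Xa1: "X ^ (d * p) * a1 = 1" unfolding a1_def using YX[of "d * p"] by (simp add: mult.commute)
    have Xa2: "X ^ (d * p) * a2 = X ^ p"
    proof -
      have "d * p = (d - 1) * p + p" using d1 by (cases d) auto
      hence e: "X ^ (d * p) = X ^ p * X ^ ((d - 1) * p)" by (metis power_add add.commute)
      have "X ^ (d * p) * a2 = X ^ p * (Y ^ ((d - 1) * p) * X ^ ((d - 1) * p))"
        unfolding a2_def e by (simp only: mult_ac)
      thus ?thesis unfolding YX by simp
    qed
    have E1: "a1 * Y ^ p * (P' ^ p * U - 2 * A * P ^ p)
      = cd ^ p * a1 * P ^ p * V - a2 * P' ^ p * V - 2 * Bv * a1 * Y ^ p * P ^ p"
      using E0 unfolding YN[symmetric]
      by (simp add: power_mult_distrib a1_def a2_def N_def power_mult[symmetric] algebra_simps)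
    have "(X ^ (d * p) * X ^ p) * (a1 * Y ^ p * (P' ^ p * U - 2 * A * P ^ p))
       = (X ^ (d * p) * a1) * (Y ^ p * X ^ p) * (P' ^ p * U - 2 * A * P ^ p)" by (simp add: algebra_simps)
    also have "\<dots> = P' ^ p * U - 2 * A * P ^ p" by (simp add: Xa1 YX)
    finally have L: "(X ^ (d * p) * X ^ p) * (a1 * Y ^ p * (P' ^ p * U - 2 * A * P ^ p)) = P' ^ p * U - 2 * A * P ^ p" .
    have "(X ^ (d * p) * X ^ p) * (cd ^ p * a1 * P ^ p * V - a2 * P' ^ p * V - 2 * Bv * a1 * Y ^ p * P ^ p)
       = cd ^ p * (X ^ (d * p) * a1) * X ^ p * P ^ p * V - (X ^ (d * p) * a2) * X ^ p * P' ^ p * V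
         - 2 * Bv * (X ^ (d * p) * a1) * (Y ^ p * X ^ p) * P ^ p" by (simp add: algebra_simps)
    also have "\<dots> = cd ^ p * X ^ p * P ^ p * V - X ^ p * X ^ p * P' ^ p * V - 2 * Bv * P ^ p"
      by (simp add: Xa1 Xa2 YX)
    finally have R: "(X ^ (d * p) * X ^ p) * (cd ^ p * a1 * P ^ p * V - a2 * P' ^ p * V - 2 * Bv * a1 * Y ^ p * P ^ p)
      = cd ^ p * X ^ p * P ^ p * V - X ^ p * X ^ p * P' ^ p * V - 2 * Bv * P ^ p" .
    have "P' ^ p * U - 2 * A * P ^ p = cd ^ p * X ^ p * P ^ p * V - X ^ p * X ^ p * P' ^ p * V - 2 * Bv * P ^ p"
      using L R E1 by simp
    moreover have X2: "X ^ (2 * p) = X ^ p * (X ^ p :: 'k rf)" by (simp add: mult_2 power_add)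
    moreover have "P' ^ p * (U + X ^ (2 * p) * V) - P ^ p * (2 * A + cd ^ p * X ^ p * V - 2 * Bv)
       = (P' ^ p * U - 2 * A * P ^ p) - (cd ^ p * X ^ p * P ^ p * V - X ^ p * X ^ p * P' ^ p * V - 2 * Bv * P ^ p)"
      unfolding X2 by (simp add: algebra_simps)
    ultimately show ?thesis by simp
  qed
  define M where "M = max (degree v) (degree \<beta>)"
  have XV: "X ^ M * V = to_fract (reflN M v)"
    using ev_refl[of v M X] by (simp add: M_def ev_X V_def Y_def)
  have XB: "X ^ M * Bv = to_fract (reflN M \<beta>)"
    using ev_refl[of \<beta> M X] by (simp add: M_def ev_X Bv_def Y_def)
  define w where "w = monom 1 M * u + monom 1 (2 * p) * reflN M v"
  define e where "e = 2 * monom 1 M * \<alpha> + smult (of_nat (Suc d) ^ p) (monom 1 p * reflN M v) - 2 * reflN M \<beta>"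
  have tfw: "to_fract w = X ^ M * (U + X ^ (2 * p) * V)"
    unfolding w_def by (simp add: tf_monom1 U_def XV[symmetric] algebra_simps)
  have tfe: "to_fract e = X ^ M * (2 * A + cd ^ p * X ^ p * V - 2 * Bv)"
    unfolding e_def by (simp add: tf_monom1 tf_smult tf_2 A_def XV[symmetric] XB[symmetric] embh.hpow
       emb_ofnat emb_ofnat_Suc cd_def algebra_simps)
  have "to_fract (pderiv Pb ^ p * w) = X ^ M * (P' ^ p * (U + X ^ (2 * p) * V))"
    by (simp only: to_fract_mult to_fract_power tfw P'_def mult_ac)
  also have "\<dots> = X ^ M * (P ^ p * (2 * A + cd ^ p * X ^ p * V - 2 * Bv))" by (simp only: KEY)
  also have "\<dots> = to_fract (Pb ^ p * e)"
    by (simp only: to_fract_mult to_fract_power tfe P_def mult_ac)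
  finally have "to_fract (pderiv Pb ^ p * w) = to_fract (Pb ^ p * e)" .
  hence "pderiv Pb ^ p * w = Pb ^ p * e" by (simp only: to_fract_eq_iff)
  hence "Pb ^ p dvd pderiv Pb ^ p * w" by (metis dvd_triv_left)
  hence "Pb ^ p dvd w" by (rule cop_dvd[OF cop_pow[OF Pb_sep]])
  then obtain w0 where w0: "w = Pb ^ p * w0" by (elim dvdE)
  have x_eq: "x = (X, 0)" by (simp add: x_def hf_x_def)
  have y_eq: "y = (0, 1)" by (simp add: y_def hf_y_def)
  have x1_eq: "x1 = (Y, 0)" by (simp add: x1_def hf_x1_eq Y_def)
  have mul_eq: "mul a b = (fst a * fst b + snd a * snd b * P, fst a * snd b + snd a * fst b)" for a b
    by (simp add: mul_def hf_mult_def P_def)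
  have t_eq: "t = (0, Y ^ (g + 1))"
    by (simp add: t_def hf_t_def hf_x1_eq hf_pow_r hf_y_def hf_mult_def Y_def)
  have pw_r: "pw (a, 0) n = (a ^ n, 0)" for a n by (simp add: pw_def hf_pow_r)
  have pw_e: "pw (0, b) (2 * r) = ((b * b * P) ^ r, 0)" for b by (simp add: pw_def hf_pow_i_even P_def)
  have pw_o: "pw (0, b) p = (0, b * (b * b * P) ^ r)" for b by (simp add: pw_def pr hf_pow_i_odd P_def)
  have iv_r: "iv (a, 0) = (inverse a, 0)" for a by (simp add: iv_def hf_inv_r)
  have iv_i: "iv (0, b) = (0, inverse (b * P))" for b by (simp add: iv_def hf_inv_i P_def)
  have p1: "p - 1 = 2 * r" using pr by simp
  define FU where "FU = X ^ (i * p) * (X ^ (2 * r) + to_fract (pderiv u)) * inverse (P ^ r) * inverse P"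
  have fU_eq: "fU = (0, FU)"
    unfolding fU_def FU_def x_eq y_eq p1 pw_r pw_e iv_r iv_i hf_poly_r ev_X mul_eq hf_add_def hf_d_r
    by simp
  have dY: "rf_deriv Y = - (Y * Y)" unfolding Y_def by (rule rf_deriv_Y)
  define T where "T = Y ^ (g + 1)"
  define FV where "FV = Y ^ (p * (g - 1 - i)) * (Y ^ (2 * r) + ev (pderiv v) Y) * inverse ((T * T * P) ^ r)
                        * ((Y * Y) * inverse (T * P))"
  have fV_eq: "fV = (0, FV)"
    unfolding fV_def FV_def x1_eq t_eq T_def[symmetric] p1 pw_r pw_e iv_r iv_i hf_poly_r mul_eq hf_add_def
      hf_d_r dY hf_neg_def
    by simp
  define H where "H = X ^ (i * p) * (U + X ^ (2 * p) * V) * inverse (P ^ r * P)"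
  have h_eq: "h = (0, H)"
    unfolding h_def H_def x_eq y_eq x1_eq pw_r pw_o iv_r iv_i hf_poly_r ev_X mul_eq hf_add_def
      U_def[symmetric] V_def[symmetric]
    by simp
  obtain r0 where r0: "r = Suc r0" using r1 by (cases r) auto
  have Pr: "P ^ r = P ^ r0 * P" by (simp add: r0)
  have c1f: "X ^ (2 * r) + to_fract (pderiv u) = P ^ (2 * r) * to_fract c1"
    using arg_cong[OF c1, of to_fract] by (simp add: tf_monom1 to_fract_power P_def)
  have "FU = to_fract (monom 1 (i * p) * Pb ^ r0 * c1)"
  proof -
    have e2: "P ^ (2 * r) = P ^ r0 * (P ^ r0 * P * P)" unfolding r0 mult_2 power_add power_Suc by (simp only: mult_ac)
    show ?thesis unfolding FU_def c1f e2 using P0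
      by (simp add: tf_monom1 to_fract_power P_def[symmetric] Pr field_simps)
  qed
  hence goalU: "fU \<in> Omega_U Pb" unfolding fU_eq by (simp only: OmegaU_mem)
  have T0: "T \<noteq> 0" using Y0 by (simp add: T_def)
  have evQT: "ev Qb Y = T * T * P"
  proof -
    have "Suc d = (g + 1) + (g + 1)" by (simp add: d_def)
    hence "Y ^ Suc d = T * T" unfolding T_def by (simp only: power_add)
    thus ?thesis unfolding evQ by simp
  qed
  have em1: "emb (1::'k) = 1" by (simp add: emb_def one_pCons[symmetric])
  have c2f: "Y ^ (2 * r) + ev (pderiv v) Y = (T * T * P) ^ (2 * r) * ev c2 Y"
    using arg_cong[OF c2, of "\<lambda>q. ev q Y"] by (simp add: ev_add ev_mult ev_power ev_monom em1 evQT)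
  define B where "B = - (monom 1 (p * (g - 1 - i)) * Qb ^ r0 * c2)"
  have evB: "ev B Y = - (Y ^ (p * (g - 1 - i)) * (T * T * P) ^ r0 * ev c2 Y)"
    by (simp add: B_def ev_minus ev_mult ev_power ev_monom em1 evQT)
  have "FV = - (ev B (inverse X) * inverse X ^ (g + 3))"
  proof -
    define Z where "Z = T * T * P"
    have Z0: "Z \<noteq> 0" using T0 P0 by (simp add: Z_def)
    have e2: "Z ^ (2 * r) = Z ^ r0 * (Z ^ r0 * Z * Z)" unfolding r0 mult_2 power_add power_Suc by (simp only: mult_ac)
    have e3: "Z ^ r = Z ^ r0 * Z" unfolding r0 by simp
    have e4: "Y ^ (g + 3) = T * Y * Y" by (simp add: T_def power_add numeral_3_eq_3)
    show ?thesis
      unfolding FV_def c2f evB Y_def[symmetric] e4 Z_def[symmetric] e2 e3 using Z0 T0 P0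
      by (simp add: Z_def field_simps)
  qed
  hence goalV: "fV \<in> Omega_V Pb g" unfolding fV_eq by (simp only: OmegaV_mem)
  have Wf: "U + X ^ (2 * p) * V = Y ^ M * (P ^ p * to_fract w0)"
  proof -
    have "X ^ M * (U + X ^ (2 * p) * V) = P ^ p * to_fract w0"
      using tfw unfolding w0 by (simp add: to_fract_power P_def)
    hence "Y ^ M * (X ^ M * (U + X ^ (2 * p) * V)) = Y ^ M * (P ^ p * to_fract w0)" by simp
    thus ?thesis unfolding mult.assoc[symmetric] YX by simp
  qed
  have "H = to_fract (monom 1 (i * p) * Pb ^ r * w0) * inverse X ^ M"
  proof -
    have e5: "P ^ p = P ^ r * P ^ r * P" unfolding pr mult_2 power_Suc power_add by (simp only: mult_ac)
    show ?thesis unfolding H_def Wf e5 Y_def[symmetric] using P0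
      by (simp add: tf_monom1 to_fract_power P_def[symmetric] field_simps)
  qed
  hence goalH: "h \<in> O_UV Pb" unfolding h_eq by (simp only: OUV_mem)
  define V' where "V' = ev (pderiv v) Y"
  define S where "S = (X :: 'k rf) ^ (i * p)"
  have FV2: "FV = S * (X ^ (2 * r) + X ^ (2 * p) * (Y * Y) * V') * inverse (P ^ r * P)"
  proof -
    have gj: "g = Suc (i + (g - 1 - i))" using hi by linarith
    have gp: "(g + 1) * p = p * (g - 1 - i) + i * p + 2 * p"
      by (subst gj, subst (2) gj) (simp add: algebra_simps)
    have "T ^ p * X ^ (i * p) * X ^ (2 * p)
        = Y ^ (p * (g - 1 - i)) * (Y ^ (i * p) * X ^ (i * p)) * (Y ^ (2 * p) * X ^ (2 * p))"
    proof -
      have "T ^ p = Y ^ ((g + 1) * p)" unfolding T_def by (rule power_mult[symmetric])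
      also have "\<dots> = Y ^ (p * (g - 1 - i)) * Y ^ (i * p) * Y ^ (2 * p)" by (simp only: gp power_add)
      finally show ?thesis by (simp only: mult_ac)
    qed
    hence Yj: "Y ^ (p * (g - 1 - i)) = T ^ p * X ^ (i * p) * X ^ (2 * p)" unfolding YX by simp
    have Tp: "T ^ p = T ^ r * T ^ r * T" unfolding pr mult_2 power_Suc power_add by (simp only: mult_ac)
    have X2p: "X ^ (2 * p) = X ^ (2 * r) * (X ^ (2 * r) * X * X)"
      unfolding pr mult_2 power_Suc power_add by (simp only: mult_ac)
    have XYr: "X ^ (2 * r) * Y ^ (2 * r) = 1" using YX[of "2 * r"] by (simp add: mult.commute)
    have "FV = S * (X ^ (2 * p) * (Y ^ (2 * r) * (Y * Y)) + X ^ (2 * p) * (Y * Y) * V') * inverse (P ^ r * P)"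
      unfolding FV_def Yj Tp S_def using T0 P0 by (simp add: field_simps power_mult_distrib V'_def)
    also have "X ^ (2 * p) * (Y ^ (2 * r) * (Y * Y)) = X ^ (2 * r)"
    proof -
      have "X ^ (2 * p) * (Y ^ (2 * r) * (Y * Y)) = X ^ (2 * r) * (X ^ (2 * r) * Y ^ (2 * r)) * (X * Y) * (X * Y)"
        unfolding X2p by (simp only: mult_ac)
      thus ?thesis unfolding XYr XY by simp
    qed
    finally show ?thesis .
  qed
  have ofp: "(of_nat p :: 'k rf) = 0" using of_nat_CHAR[where 'a="'k rf"] by (simp add: CHAR_rf p_char)
  have two0: "(2 :: 'k rf) \<noteq> 0"
  proof
    assume "(2 :: 'k rf) = 0"
    hence "(of_nat 2 :: 'k rf) = 0" by simp
    hence "CHAR('k rf) dvd 2" by (simp only: of_nat_eq_0_iff_char_dvd)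
    hence "p dvd 2" by (simp add: CHAR_rf p_char)
    thus False using \<open>p > 2\<close> dvd_imp_le[of p 2] by linarith
  qed
  have half: "(of_nat (Suc r) :: 'k rf) = 1 / 2"
  proof -
    have "(of_nat (Suc r) :: 'k rf) * 2 = of_nat (Suc p)" by (simp add: pr algebra_simps)
    also have "\<dots> = 1" using ofp by simp
    finally show ?thesis using two0 by (simp add: field_simps)
  qed
  have dS: "rf_deriv S = 0" unfolding S_def rf_deriv_power by (simp add: ofp)
  have dX2: "rf_deriv (X ^ (2 * p) :: 'k rf) = 0" unfolding rf_deriv_power by (simp add: ofp)
  have dV: "rf_deriv V = V' * (- (Y * Y))" by (simp add: V_def V'_def rf_deriv_ev dY)
  have dU: "rf_deriv U = to_fract (pderiv u)" by (simp add: U_def)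
  have dI: "rf_deriv (inverse (P ^ r * P)) = - (P ^ r * P' / 2) / ((P ^ r * P) * (P ^ r * P))"
  proof -
    have "rf_deriv (P ^ Suc r) = of_nat (Suc r) * P ^ r * P'"
      using rf_deriv_power[of P "Suc r"] by (simp add: P_def P'_def del: power_Suc of_nat_Suc)
    hence e: "rf_deriv (P ^ r * P) = P ^ r * P' / 2" unfolding half by (simp add: mult.commute)
    show ?thesis unfolding rf_deriv_inverse e ..
  qed
  have dH: "rf_deriv H = S * (to_fract (pderiv u) + X ^ (2 * p) * (V' * (- (Y * Y)))) * inverse (P ^ r * P)
       + S * (U + X ^ (2 * p) * V) * (- (P ^ r * P' / 2) / ((P ^ r * P) * (P ^ r * P)))"
    unfolding H_def S_def[symmetric] rf_deriv_mult rf_deriv_add dS dX2 dV dU dI by (simp add: algebra_simps)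
  have fin: "FV + - FU + (rf_deriv H + H * P' / (2 * P)) = 0"
  proof -
    have four0: "(4 :: 'k rf) \<noteq> 0" using two0 mult_eq_0_iff[of "2::'k rf" 2] by simp
    show ?thesis
      unfolding FV2 FU_def dH unfolding H_def S_def[symmetric] using P0 two0 four0
      by (simp add: field_simps)
  qed
  have "hf_add (hf_add fV (hf_neg fU)) (hf_d Pb h) = (0, 0)"
    unfolding fV_eq fU_eq h_eq hf_neg_def hf_add_def hf_d_i using fin by (simp add: P_def P'_def)
  thus ?thesis using goalU goalV goalH by blast
qed


end
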